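(* Let $G=(V,E,w)$ be an $n$-vertex directed graph with real edge weights, let $h>0$ be an integer and $\tau\ge 2n^2$ an integer. The procedure $\textsc{DetPreprocessing}(G,\tau,h)$ described below can be implemented to run in $O(n^3 h)$ time.
   Context: Let $i_h=\lceil \log_{3/2} h\rceil$ and $h_i=(3/2)^i$ for $i=0,\dots,i_h$. A path is $h'$-hop-restricted if it has at most $h'$ edges. The procedure $\textsc{DetPreprocessing}(G,\tau,h)$: initialize $C\gets\emptyset$, $\textsc{Congestion}(v)\gets 0$ for all $v\in V$, and $\pi^i_{s,t}\gets\bot$ (the empty path of weight $\infty$) for all $s,t\in V$, $i\in[0,i_h]$. Then process every vertex $s\in V$ exactly once as a root, in an arbitrary order; for each root $s$ and each $i\in[0,i_h]$ in turn: (1) compute, by $h_i$ rounds of Bellman-Ford from $s$ in the induced graph $G[V\setminus C]$, paths $\pi^i_{s,t}$ for all $t\in V$ that are shortest among $h_i$-hop-restricted paths from $s$ to $t$ in $G[V\setminus C]$; (2) for every $t\in V$ and every vertex $u$ on $\pi^i_{s,t}$, increase $\textsc{Congestion}(u)$ by $\lceil n/h_i\rceil$; (3) set $C\gets\{v\in V:\textsc{Congestion}(v)>\tau/2\}$. *)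

theory Defs
  imports Complex_Main "HOL-Library.Extended_Real"
begin

text \<open>
  Vertices are 0..<n.  Edge weights: w u v :: ereal, where w u v = \<infinity> means
  "no edge (u,v)" and otherwise w u v is the real weight (-\<infinity> is excluded by
  an assumption of the theorem).  Distances are ereal with \<infinity> = unreachable.
  The empty path [] plays the role of \<bottom> (weight \<infinity>).

  Every elementary operation of the natural implementation is charged unit cost:
  one unit per relaxation of a pair (u,v) and per vertex initialisation in each
  Bellman-Ford round, one unit per step of path extraction via layered
  predecessor pointers, one unit per vertex on an extracted path for the
  congestion update, and n units for recomputing C.
\<close>

definition hop :: "nat \<Rightarrow> real" where
  "hop i = (3/2::real) ^ i"

definition rounds :: "nat \<Rightarrow> nat" where
  "rounds i = nat \<lfloor>hop i\<rfloor>"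

definition ihmax :: "nat \<Rightarrow> nat" where
  "ihmax h = nat \<lceil>log (3/2) (real h)\<rceil>"

definition cong_incr :: "nat \<Rightarrow> nat \<Rightarrow> nat" where
  "cong_incr n i = nat \<lceil>real n / hop i\<rceil>"

definition relax :: "nat \<Rightarrow> (nat \<Rightarrow> nat \<Rightarrow> ereal) \<Rightarrow> nat set \<Rightarrow> (nat \<Rightarrow> ereal)
    \<Rightarrow> nat \<Rightarrow> ereal \<times> nat option" where
  "relax n w C d v =
     foldl (\<lambda>(dv, pv) u. if u \<notin> C \<and> d u + w u v < dv then (d u + w u v, Some u) else (dv, pv))
       (d v, None) [0..<n]"

fun bf_layer :: "nat \<Rightarrow> (nat \<Rightarrow> nat \<Rightarrow> ereal) \<Rightarrow> nat set \<Rightarrow> nat \<Rightarrow> nat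
    \<Rightarrow> (nat \<Rightarrow> ereal) \<times> (nat \<Rightarrow> nat option)" where
  "bf_layer n w C s 0 = ((\<lambda>v. if v = s \<and> s \<notin> C then 0 else \<infinity>), (\<lambda>v. None))"
| "bf_layer n w C s (Suc k) =
     (let d = fst (bf_layer n w C s k) in
       ((\<lambda>v. if v < n \<and> v \<notin> C then fst (relax n w C d v) else d v),
        (\<lambda>v. if v < n \<and> v \<notin> C then snd (relax n w C d v) else None)))"

text \<open>Recovery of the path to t from layer k, together with its cost
  (number of pointer-following steps).\<close>
fun path_of :: "nat \<Rightarrow> (nat \<Rightarrow> nat \<Rightarrow> ereal) \<Rightarrow> nat set \<Rightarrow> nat \<Rightarrow> nat \<Rightarrow> nat
    \<Rightarrow> nat list \<times> nat" where
  "path_of n w C s 0 t = ((if t = s \<and> s \<notin> C then [s] else []), 1)"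
| "path_of n w C s (Suc k) t =
     (if fst (bf_layer n w C s (Suc k)) t = \<infinity> then ([], 1)
      else (case snd (bf_layer n w C s (Suc k)) t of
              None \<Rightarrow> (let r = path_of n w C s k t in (fst r, snd r + 1))
            | Some u \<Rightarrow> (let r = path_of n w C s k u in (fst r @ [t], snd r + 1))))"

type_synonym state = "nat set \<times> (nat \<Rightarrow> nat) \<times> nat"
  \<comment> \<open>(C, Congestion, accumulated cost)\<close>

definition proc_step :: "nat \<Rightarrow> (nat \<Rightarrow> nat \<Rightarrow> ereal) \<Rightarrow> nat \<Rightarrow> nat \<Rightarrow> nat
    \<Rightarrow> state \<Rightarrow> state" where
  "proc_step n w \<tau> s i st =
     (let (C, cong, cost) = st;
          H = rounds i;
          bf_cost = n + H * (n * (n + 1));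
          ex = map (\<lambda>t. path_of n w C s H t) [0..<n];
          paths = map fst ex;
          ex_cost = sum_list (map snd ex);
          upd_cost = sum_list (map length paths);
          cong' = (\<lambda>v. cong v + cong_incr n i * length (filter (\<lambda>p. v \<in> set p) paths));
          C' = {v. v < n \<and> real (cong' v) > real \<tau> / 2}
      in (C', cong', cost + bf_cost + ex_cost + upd_cost + n))"

text \<open>Whole procedure: roots in the given (arbitrary) order, levels i = 0..i_h.
  Returns the final state; its third component is the total cost.\<close>
definition det_preprocessing :: "nat \<Rightarrow> (nat \<Rightarrow> nat \<Rightarrow> ereal) \<Rightarrow> nat \<Rightarrow> nat \<Rightarrow> nat list
    \<Rightarrow> state" where
  "det_preprocessing n w \<tau> h order =
     foldl (\<lambda>st s. foldl (\<lambda>st' i. proc_step n w \<tau> s i st') st [0..<ihmax h + 1])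
       ({}, (\<lambda>v. 0), 0) order"

definition det_preprocessing_cost :: "nat \<Rightarrow> (nat \<Rightarrow> nat \<Rightarrow> ereal) \<Rightarrow> nat \<Rightarrow> nat
    \<Rightarrow> nat list \<Rightarrow> nat" where
  "det_preprocessing_cost n w \<tau> h order = snd (snd (det_preprocessing n w \<tau> h order))"

end

theory Submission
  imports Defs
begin

lemma path_of_bounds:
  "snd (path_of n w C s k t) \<le> k + 1 \<and> length (fst (path_of n w C s k t)) \<le> k + 1"
proof (induction k arbitrary: t)
  case 0
  then show ?case by simp
next
  case (Suc k)
  show ?case
  proof (cases "fst (bf_layer n w C s (Suc k)) t = \<infinity>")
    case True
    then show ?thesis by simp
  next
    case False
    show ?thesis
    proof (cases "snd (bf_layer n w C s (Suc k)) t")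
      case None
      then show ?thesis using False Suc.IH[of t] by (simp add: Let_def)
    next
      case (Some u)
      then show ?thesis using False Suc.IH[of u] by (simp add: Let_def)
    qed
  qed
qed

lemma sum_list_bound:
  "(\<forall>x\<in>set xs. f x \<le> (b::nat)) \<Longrightarrow> sum_list (map f xs) \<le> length xs * b"
  by (induction xs) auto

lemma proc_step_cost:
  assumes "n \<ge> 1"
  shows "snd (snd (proc_step n w \<tau> s i st)) \<le> snd (snd st) + 4 * n^2 * (1 + rounds i)"
proof -
  obtain C cong cost where st: "st = (C, cong, cost)" by (cases st) auto
  define H where "H = rounds i"
  define ex where "ex = map (\<lambda>t. path_of n w C s H t) [0..<n]"
  have e1: "sum_list (map snd ex) \<le> n * (H + 1)"
    unfolding ex_def using sum_list_bound[of "[0..<n]" "\<lambda>t. snd (path_of n w C s H t)" "H+1"]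
      path_of_bounds by (simp add: o_def)
  have e2': "sum_list (map (\<lambda>t. length (fst (path_of n w C s H t))) [0..<n]) \<le> n * (H + 1)"
    using sum_list_bound[of "[0..<n]" "\<lambda>t. length (fst (path_of n w C s H t))" "H+1"]
      path_of_bounds by simp
  have e2: "sum_list (map length (map fst ex)) \<le> n * (H + 1)"
    using e2' unfolding ex_def map_map comp_def .
  have eq: "snd (snd (proc_step n w \<tau> s i st)) = cost + (n + H * (n * (n + 1))) + sum_list (map snd ex)
      + sum_list (map length (map fst ex)) + n"
    unfolding proc_step_def st H_def ex_def by (simp add: Let_def comp_def)
  have "n + H * (n * (n + 1)) + n * (H + 1) + n * (H + 1) + n = 4 * n + H * (n*n + 3 * n)"
    by (simp add: algebra_simps)
  also have "\<dots> \<le> 4 * n^2 * (1 + H)"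
  proof -
    have a: "n \<le> n * n" using assms by simp
    have "4 * n \<le> 4 * n^2" using a by (simp add: power2_eq_square)
    moreover have "H * (n*n + 3 * n) \<le> H * (4 * n^2)" using a by (simp add: power2_eq_square)
    ultimately show ?thesis by (simp add: algebra_simps)
  qed
  finally show ?thesis using eq e1 e2 st H_def by simp
qed

lemma inner_cost:
  assumes "n \<ge> 1"
  shows "snd (snd (foldl (\<lambda>st' i. proc_step n w \<tau> s i st') st xs))
     \<le> snd (snd st) + sum_list (map (\<lambda>i. 4 * n^2 * (1 + rounds i)) xs)"
proof (induction xs arbitrary: st)
  case Nil
  then show ?case by simp
next
  case (Cons a xs)
  show ?case using Cons.IH[of "proc_step n w \<tau> s a st"] proc_step_cost[OF assms, of w \<tau> s a st]
    by simp
qed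

lemma outer_cost:
  assumes "n \<ge> 1"
  shows "snd (snd (foldl (\<lambda>st s. foldl (\<lambda>st' i. proc_step n w \<tau> s i st') st ys) st xs))
     \<le> snd (snd st) + length xs * sum_list (map (\<lambda>i. 4 * n^2 * (1 + rounds i)) ys)"
proof (induction xs arbitrary: st)
  case Nil
  then show ?case by simp
next
  case (Cons a xs)
  show ?case using Cons.IH[of "foldl (\<lambda>st' i. proc_step n w \<tau> a i st') st ys"]
      inner_cost[OF assms, of w \<tau> a st ys]
    by simp
qed

lemma sum_list_cmul: "sum_list (map (\<lambda>i. (c::nat) * f i) xs) = c * sum_list (map f xs)"
  by (induction xs) (simp_all add: distrib_left)

lemma rounds_le: "real (rounds i) \<le> (3/2) ^ i"
  unfolding rounds_def hop_def by simp

lemma geo_sum: "(\<Sum>i<m. (3/2::real) ^ i) = 2 * ((3/2) ^ m - 1)"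
  by (induction m) (auto simp: algebra_simps)

lemma ih_bound:
  assumes "h > 0"
  shows "(3/2::real) ^ (ihmax h + 1) \<le> 9/4 * real h"
proof -
  have "log (3/2) (real h) \<ge> 0" using assms by simp
  hence "real (ihmax h) < log (3/2) (real h) + 1"
    unfolding ihmax_def by linarith
  hence "(3/2::real) powr real (ihmax h) \<le> (3/2) powr (log (3/2) (real h) + 1)"
    by (intro powr_mono) auto
  also have "\<dots> = real h * (3/2)" using assms by (simp add: powr_add)
  finally have "(3/2::real) ^ (ihmax h) \<le> real h * (3/2)"
    by (simp add: powr_realpow)
  thus ?thesis by simp
qed

lemma levels_bound:
  assumes "h > 0"
  shows "real (sum_list (map (\<lambda>i. 1 + rounds i) [0..<ihmax h + 1])) \<le> 9 * real h"
proof -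
  define m where "m = ihmax h + 1"
  have "real (sum_list (map (\<lambda>i. 1 + rounds i) [0..<m])) = (\<Sum>i<m. 1 + real (rounds i))"
    by (simp add: sum_list_distinct_conv_sum_set atLeast0LessThan)
  also have "\<dots> \<le> (\<Sum>i<m. 2 * (3/2::real) ^ i)"
  proof (rule sum_mono)
    fix i assume "i \<in> {..<m}"
    have "1 \<le> (3/2::real) ^ i" by simp
    thus "1 + real (rounds i) \<le> 2 * (3/2::real) ^ i" using rounds_le[of i] by linarith
  qed
  also have "\<dots> = 4 * ((3/2) ^ m - 1)" by (simp add: sum_distrib_left[symmetric] geo_sum)
  also have "\<dots> \<le> 9 * real h" using ih_bound[OF assms] unfolding m_def by simp
  finally show ?thesis unfolding m_def .
qed

theorem lemma3p3:
  "\<exists>c::real. c > 0 \<and>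
     (\<forall>(n::nat) (w::nat \<Rightarrow> nat \<Rightarrow> ereal) (\<tau>::nat) (h::nat) (order::nat list).
        h > 0 \<longrightarrow> \<tau> \<ge> 2 * n^2 \<longrightarrow> (\<forall>u v. w u v \<noteq> -\<infinity>) \<longrightarrow>
        distinct order \<longrightarrow> set order = {0..<n} \<longrightarrow>
        real (det_preprocessing_cost n w \<tau> h order) \<le> c * real n ^ 3 * real h)"
proof (intro exI[of _ 36] conjI allI impI)
  fix n :: nat and w :: "nat \<Rightarrow> nat \<Rightarrow> ereal" and \<tau> h :: nat and order :: "nat list"
  assume h: "(0::nat) < h" and d: "distinct order" and so: "set order = {0..<n}"
  have len: "length order = n" using distinct_card[OF d] so by simp
  show "real (det_preprocessing_cost n w \<tau> h order) \<le> 36 * real n ^ 3 * real h"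
  proof (cases "n = 0")
    case True
    then have "order = []" using so by simp
    then show ?thesis unfolding det_preprocessing_cost_def det_preprocessing_def by simp
  next
    case False
    hence n1: "n \<ge> 1" by simp
    define L where "L = [0..<ihmax h + 1]"
    define S where "S = sum_list (map (\<lambda>i. 1 + rounds i) L)"
    have sm: "sum_list (map (\<lambda>i. 4 * n^2 * (1 + rounds i)) L) = 4 * n^2 * S"
      unfolding S_def by (rule sum_list_cmul)
    have oc: "snd (snd (foldl (\<lambda>st s. foldl (\<lambda>st' i. proc_step n w \<tau> s i st') st L) ({}, (\<lambda>v. 0), 0) order))
     \<le> 0 + length order * sum_list (map (\<lambda>i. 4 * n^2 * (1 + rounds i)) L)"
      using outer_cost[OF n1, of w \<tau> L "({}, (\<lambda>v. 0), 0)" order] by (simp only: snd_conv)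
    have "det_preprocessing_cost n w \<tau> h order \<le> n * (4 * n^2 * S)"
      using oc unfolding sm len det_preprocessing_cost_def det_preprocessing_def L_def[symmetric] by simp
    hence "real (det_preprocessing_cost n w \<tau> h order) \<le> real (n * (4 * n^2 * S))"
      by (simp only: of_nat_le_iff)
    also have "\<dots> = real n * (4 * real n^2 * real S)" by simp
    also have "\<dots> \<le> real n * (4 * real n^2 * (9 * real h))"
      using levels_bound[OF h] unfolding L_def[symmetric] S_def[symmetric]
      by (intro mult_left_mono) auto
    also have "\<dots> = 36 * real n ^ 3 * real h" by (simp add: power2_eq_square power3_eq_cube)
    finally show ?thesis .
  qed
qed simp

end
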